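(* Let $G$ be a connected graph of order $n\geq 2$ and let $g:V(G_1)\to V(G_2)$ be a constant function. Then $Dist(F_G)=Dist(G)$.
   Context: All graphs are finite, simple and undirected. A labeling $f:V(H)\to\{1,\dots,t\}$ is $t$-distinguishing if the only label-preserving automorphism of $H$ is the identity; $Dist(H)$ is the least such $t$. Functigraph: for disjoint copies $G_1,G_2$ of $G$ and a function $g:V(G_1)\to V(G_2)$, $F_G$ has vertex set $V(G_1)\cup V(G_2)$ and edge set $E(G_1)\cup E(G_2)\cup\{uv: u\in V(G_1),\ g(u)=v\}$. *)

theory Defs
  imports Main
begin

definition simple_graph :: "'a set \<Rightarrow> ('a \<Rightarrow> 'a \<Rightarrow> bool) \<Rightarrow> bool" where
  "simple_graph V E \<longleftrightarrow> finite V \<and> (\<forall>u v. E u v \<longrightarrow> u \<in> V \<and> v \<in> V)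
     \<and> (\<forall>u v. E u v \<longrightarrow> E v u) \<and> (\<forall>u. \<not> E u u)"

definition connected_graph :: "'a set \<Rightarrow> ('a \<Rightarrow> 'a \<Rightarrow> bool) \<Rightarrow> bool" where
  "connected_graph V E \<longleftrightarrow> (\<forall>u\<in>V. \<forall>v\<in>V. E\<^sup>*\<^sup>* u v)"

definition automorphism :: "'a set \<Rightarrow> ('a \<Rightarrow> 'a \<Rightarrow> bool) \<Rightarrow> ('a \<Rightarrow> 'a) \<Rightarrow> bool" where
  "automorphism V E \<sigma> \<longleftrightarrow> bij_betw \<sigma> V V \<and> (\<forall>u\<in>V. \<forall>v\<in>V. E (\<sigma> u) (\<sigma> v) \<longleftrightarrow> E u v)"

definition distinguishing :: "'a set \<Rightarrow> ('a \<Rightarrow> 'a \<Rightarrow> bool) \<Rightarrow> nat \<Rightarrow> ('a \<Rightarrow> nat) \<Rightarrow> bool" where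
  "distinguishing V E t f \<longleftrightarrow> (\<forall>v\<in>V. f v \<in> {1..t}) \<and>
     (\<forall>\<sigma>. automorphism V E \<sigma> \<and> (\<forall>v\<in>V. f (\<sigma> v) = f v) \<longrightarrow> (\<forall>v\<in>V. \<sigma> v = v))"

definition Dist :: "'a set \<Rightarrow> ('a \<Rightarrow> 'a \<Rightarrow> bool) \<Rightarrow> nat" where
  "Dist V E = (LEAST t. \<exists>f. distinguishing V E t f)"

text \<open>Functigraph: G1 = Inl-copy, G2 = Inr-copy of G, plus edges u -- g(u).\<close>
definition fg_vertices :: "'a set \<Rightarrow> ('a + 'a) set" where
  "fg_vertices V = Inl ` V \<union> Inr ` V"

fun fg_edges :: "('a \<Rightarrow> 'a \<Rightarrow> bool) \<Rightarrow> ('a \<Rightarrow> 'a) \<Rightarrow> 'a + 'a \<Rightarrow> 'a + 'a \<Rightarrow> bool" where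
  "fg_edges E g (Inl u) (Inl v) = E u v"
| "fg_edges E g (Inr u) (Inr v) = E u v"
| "fg_edges E g (Inl u) (Inr v) = (g u = v)"
| "fg_edges E g (Inr v) (Inl u) = (g u = v)"

end

theory Submission
  imports Defs
begin

lemma fgv_simps[simp]: "Inl u \<in> fg_vertices V \<longleftrightarrow> u \<in> V" "Inr u \<in> fg_vertices V \<longleftrightarrow> u \<in> V"
  unfolding fg_vertices_def by auto

lemma fgv_cases: "x \<in> fg_vertices V \<Longrightarrow> (\<And>u. u\<in>V \<Longrightarrow> x = Inl u \<Longrightarrow> P) \<Longrightarrow> (\<And>u. u\<in>V \<Longrightarrow> x = Inr u \<Longrightarrow> P) \<Longrightarrow> P"
  unfolding fg_vertices_def by auto

lemma finite_fgv: "finite V \<Longrightarrow> finite (fg_vertices V)"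
  unfolding fg_vertices_def by auto

lemma aut_deg:
  assumes "automorphism W R s" "x \<in> W"
  shows "card {y\<in>W. R (s x) y} = card {y\<in>W. R x y}"
proof -
  have b: "bij_betw s W W" and r: "\<forall>u\<in>W. \<forall>v\<in>W. R (s u) (s v) \<longleftrightarrow> R u v"
    using assms(1) unfolding automorphism_def by auto
  have "{y\<in>W. R (s x) y} = s ` {y\<in>W. R x y}"
  proof
    show "s ` {y\<in>W. R x y} \<subseteq> {y\<in>W. R (s x) y}" using b r assms(2) by (auto simp: bij_betw_def)
    show "{y\<in>W. R (s x) y} \<subseteq> s ` {y\<in>W. R x y}"
    proof
      fix y assume y: "y \<in> {y\<in>W. R (s x) y}"
      then obtain z where "z \<in> W" "y = s z" using b by (metis bij_betw_def imageE mem_Collect_eq)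
      then show "y \<in> s ` {y\<in>W. R x y}" using y r assms(2) by auto
    qed
  qed
  moreover have "inj_on s {y\<in>W. R x y}" using b by (auto simp: bij_betw_def intro: inj_on_subset)
  ultimately show ?thesis by (simp add: card_image)
qed

lemma dist_exists: assumes "finite V" shows "\<exists>f. distinguishing V E (card V) f"
proof -
  obtain h where h: "bij_betw h V {0..<card V}" using ex_bij_betw_finite_nat[OF assms] by blast
  let ?f = "\<lambda>v. Suc (h v)"
  have "distinguishing V E (card V) ?f"
    unfolding distinguishing_def
  proof (intro conjI allI impI ballI)
    fix v assume v: "v \<in> V"
    have "h v \<in> {0..<card V}" using h v by (auto simp: bij_betw_def)
    then show "?f v \<in> {1..card V}" by simp
  next
    fix s v assume a: "automorphism V E s \<and> (\<forall>v\<in>V. ?f (s v) = ?f v)" "v \<in> V"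
    then have "s v \<in> V" by (auto simp: automorphism_def bij_betw_def)
    moreover have "h (s v) = h v" using a by auto
    ultimately show "s v = v" using h a(2) by (auto simp: bij_betw_def inj_on_def)
  qed
  then show ?thesis by blast
qed

lemma ext_aut:
  assumes "\<forall>u\<in>V. g u = c" "automorphism V E t"
  shows "automorphism (fg_vertices V) (fg_edges E g) (\<lambda>x. case x of Inl u \<Rightarrow> Inl (t u) | Inr u \<Rightarrow> Inr u)"
proof -
  have b: "bij_betw t V V" and r: "\<forall>u\<in>V. \<forall>v\<in>V. E (t u) (t v) \<longleftrightarrow> E u v"
    using assms(2) unfolding automorphism_def by auto
  let ?s = "\<lambda>x. case x of Inl u \<Rightarrow> Inl (t u) | Inr u \<Rightarrow> Inr u"
  have "bij_betw ?s (fg_vertices V) (fg_vertices V)"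
    unfolding bij_betw_def
  proof
    have i: "inj_on t V" and tV: "t ` V = V" using b by (auto simp: bij_betw_def)
    show "inj_on ?s (fg_vertices V)"
    proof (rule inj_onI)
      fix x y assume x: "x \<in> fg_vertices V" and y: "y \<in> fg_vertices V" and e: "?s x = ?s y"
      show "x = y" using x y e i by (elim fgv_cases) (auto dest: inj_onD)
    qed
    show "?s ` fg_vertices V = fg_vertices V"
    proof
      show "?s ` fg_vertices V \<subseteq> fg_vertices V" using tV by (auto elim!: fgv_cases)
      show "fg_vertices V \<subseteq> ?s ` fg_vertices V"
      proof
        fix x assume "x \<in> fg_vertices V"
        then show "x \<in> ?s ` fg_vertices V"
        proof (rule fgv_cases)
          fix u assume u: "u \<in> V" "x = Inl u"
          then obtain w where "w \<in> V" "u = t w" using tV by blast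
          then have "?s (Inl w) = x" "Inl w \<in> fg_vertices V" using u by auto
          then show ?thesis by (metis image_eqI)
        next
          fix u assume u: "u \<in> V" "x = Inr u"
          then have "?s (Inr u) = x" "Inr u \<in> fg_vertices V" by auto
          then show ?thesis by (metis image_eqI)
        qed
      qed
    qed
  qed
  moreover have "\<forall>x\<in>fg_vertices V. \<forall>y\<in>fg_vertices V. fg_edges E g (?s x) (?s y) \<longleftrightarrow> fg_edges E g x y"
  proof (intro ballI)
    fix x y assume x: "x \<in> fg_vertices V" and y: "y \<in> fg_vertices V"
    have tV: "\<And>u. u \<in> V \<Longrightarrow> t u \<in> V" using b by (auto simp: bij_betw_def)
    show "fg_edges E g (?s x) (?s y) \<longleftrightarrow> fg_edges E g x y"
      using x y by (elim fgv_cases) (auto simp: r assms(1) tV)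
  qed
  ultimately show ?thesis unfolding automorphism_def by blast
qed


lemma aut_fix:
  assumes G: "simple_graph V E" "connected_graph V E" "card V \<ge> 2" "c \<in> V" "\<forall>u\<in>V. g u = c"
    and s: "automorphism (fg_vertices V) (fg_edges E g) s"
  shows "s (Inr c) = Inr c"
proof -
  let ?W = "fg_vertices V" and ?R = "fg_edges E g"
  have fin: "finite V" using G(1) by (simp add: simple_graph_def)
  have EV: "\<And>u v. E u v \<Longrightarrow> u \<in> V \<and> v \<in> V" and irr: "\<And>u. \<not> E u u"
    using G(1) by (auto simp: simple_graph_def)
  obtain v where v: "v \<in> V" "v \<noteq> c"
  proof -
    have "\<not> V \<subseteq> {c}" using G(3) card_mono[of "{c}" V] by (metis One_nat_def card.empty card.insert empty_iff finite.intros(1) finite_insert not_less_eq_eq numeral_2_eq_2 subset_singletonD card_0_eq)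
    then show ?thesis using that by blast
  qed
  have "E\<^sup>*\<^sup>* c v" using G(2,4) v(1) by (simp add: connected_graph_def)
  then obtain w where w: "E c w" using v(2) by (metis converse_rtranclpE)
  have wV: "w \<in> V" using EV[OF w] by simp
  have n: "card V \<ge> 2" by fact
  let ?n = "card V"
  have finW: "finite ?W" using fin by (rule finite_fgv)
  have d1: "card {y\<in>?W. ?R (Inr c) y} \<ge> ?n + 1"
  proof -
    have sub: "insert (Inr w) (Inl ` V) \<subseteq> {y\<in>?W. ?R (Inr c) y}" using w wV G(5) by auto
    have "card (insert (Inr w) (Inl ` V)) = ?n + 1"
      using fin by (subst card_insert_disjoint) (auto simp: card_image)
    moreover have "card (insert (Inr w) (Inl ` V)) \<le> card {y\<in>?W. ?R (Inr c) y}"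
      using sub finW by (intro card_mono) auto
    ultimately show ?thesis by simp
  qed
  have scW: "s (Inr c) \<in> ?W" using s G(4) by (auto simp: automorphism_def bij_betw_def)
  have deq: "card {y\<in>?W. ?R (s (Inr c)) y} = card {y\<in>?W. ?R (Inr c) y}"
    using aut_deg[OF s] G(4) by simp
  show ?thesis
  proof (rule fgv_cases[OF scW])
    fix u assume u: "u \<in> V" "s (Inr c) = Inl u"
    have "{y\<in>?W. ?R (Inl u) y} \<subseteq> insert (Inr c) (Inl ` (V - {u}))"
    proof
      fix y assume "y \<in> {y\<in>?W. ?R (Inl u) y}"
      then show "y \<in> insert (Inr c) (Inl ` (V - {u}))"
        using u G(5) irr by (auto elim!: fgv_cases)
    qed
    then have "card {y\<in>?W. ?R (Inl u) y} \<le> card (insert (Inr c) (Inl ` (V - {u})))"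
      using fin by (intro card_mono) auto
    also have "\<dots> \<le> card ((Inl :: 'a \<Rightarrow> 'a + 'a) ` (V - {u})) + 1" using fin by (auto simp: card_insert_if)
    also have "\<dots> = ?n - 1 + 1" using fin u(1) by (simp add: card_image)
    finally show ?thesis using d1 deq u n by simp
  next
    fix u assume u: "u \<in> V" "s (Inr c) = Inr u"
    show ?thesis
    proof (cases "u = c")
      case True then show ?thesis using u by simp
    next
      case False
      have "{y\<in>?W. ?R (Inr u) y} \<subseteq> Inr ` (V - {u})"
      proof
        fix y assume "y \<in> {y\<in>?W. ?R (Inr u) y}"
        then show "y \<in> Inr ` (V - {u})"
          using u G(5) irr False by (auto elim!: fgv_cases)
      qed
      then have "card {y\<in>?W. ?R (Inr u) y} \<le> card ((Inr :: 'a \<Rightarrow> 'a + 'a) ` (V - {u}))"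
        using fin by (intro card_mono) auto
      also have "\<dots> = ?n - 1" using fin u(1) by (simp add: card_image)
      finally show ?thesis using d1 deq u n by simp
    qed
  qed
qed


lemma aut_sides:
  assumes G: "simple_graph V E" "connected_graph V E" "card V \<ge> 2" "c \<in> V" "\<forall>u\<in>V. g u = c"
    and s: "automorphism (fg_vertices V) (fg_edges E g) s"
  shows "\<forall>u\<in>V. \<exists>v\<in>V. s (Inl u) = Inl v" "\<forall>u\<in>V. \<exists>v\<in>V. s (Inr u) = Inr v"
proof -
  let ?W = "fg_vertices V" and ?R = "fg_edges E g"
  have fin: "finite V" using G(1) by (simp add: simple_graph_def)
  have EV: "\<And>u v. E u v \<Longrightarrow> u \<in> V \<and> v \<in> V"
    using G(1) by (auto simp: simple_graph_def)
  have b: "bij_betw s ?W ?W" and r: "\<forall>u\<in>?W. \<forall>v\<in>?W. ?R (s u) (s v) \<longleftrightarrow> ?R u v"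
    using s unfolding automorphism_def by auto
  have sW: "\<And>x. x \<in> ?W \<Longrightarrow> s x \<in> ?W" using b by (auto simp: bij_betw_def)
  have inj: "inj_on s ?W" using b by (auto simp: bij_betw_def)
  have sfix: "s (Inr c) = Inr c" using aut_fix[OF G s] .
  define R' where "R' x y \<longleftrightarrow> x \<in> ?W \<and> y \<in> ?W \<and> x \<noteq> Inr c \<and> y \<noteq> Inr c \<and> ?R x y" for x y
  have c1: "R'\<^sup>*\<^sup>* (Inl u) (Inl v)" if "E\<^sup>*\<^sup>* u v" for u v
    using that
  proof (induction rule: rtranclp_induct)
    case base then show ?case by simp
  next
    case (step y z)
    have "R' (Inl y) (Inl z)" using EV[OF step(2)] step(2) by (simp add: R'_def)
    then show ?case using step(3) by simp
  qed
  have ne: "s x \<noteq> Inr c" if "x \<in> ?W" "x \<noteq> Inr c" for x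
    using that sfix inj G(4) by (metis fgv_simps(2) inj_onD)
  have c2: "R'\<^sup>*\<^sup>* (s x) (s y)" if "R'\<^sup>*\<^sup>* x y" for x y
    using that
  proof (induction rule: rtranclp_induct)
    case base then show ?case by simp
  next
    case (step y z)
    have "R' (s y) (s z)" using step(2) r sW ne unfolding R'_def by auto
    then show ?case using step(3) by simp
  qed
  have c3: "\<exists>v\<in>V - {c}. y = Inr v" if "R'\<^sup>*\<^sup>* (Inr w) y" "w \<in> V - {c}" for w y
    using that(1)
  proof (induction rule: rtranclp_induct)
    case base then show ?case using that(2) by simp
  next
    case (step y z)
    then obtain v where v: "v \<in> V - {c}" "y = Inr v" by blast
    have z: "z \<in> ?W" "z \<noteq> Inr c" "?R (Inr v) z" using step(2) v unfolding R'_def by auto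
    show ?case using z v G(5) by (auto elim!: fgv_cases)
  qed
  have L: "\<forall>u\<in>V. \<exists>v\<in>V. s (Inl u) = Inl v"
  proof (rule ccontr)
    assume "\<not> ?thesis"
    then obtain u0 w where u0: "u0 \<in> V" "s (Inl u0) = Inr w"
      using sW by (metis fgv_cases fgv_simps(1))
    have wV: "w \<in> V" using sW[of "Inl u0"] u0 by simp
    have wc: "w \<noteq> c" using ne[of "Inl u0"] u0 by auto
    have "s ` (Inl ` V) \<subseteq> Inr ` (V - {c})"
    proof
      fix x assume "x \<in> s ` (Inl ` V)"
      then obtain v where v: "v \<in> V" "x = s (Inl v)" by blast
      have "E\<^sup>*\<^sup>* u0 v" using G(2) u0(1) v(1) by (simp add: connected_graph_def)
      then have "R'\<^sup>*\<^sup>* (s (Inl u0)) (s (Inl v))" using c1 c2 by blast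
      then obtain v' where "v' \<in> V - {c}" "s (Inl v) = Inr v'" using c3[of w] u0 wV wc by auto
      then show "x \<in> Inr ` (V - {c})" using v by auto
    qed
    then have "card (s ` (Inl ` V)) \<le> card ((Inr :: 'a \<Rightarrow> 'a + 'a) ` (V - {c}))"
      using fin by (intro card_mono) auto
    also have "\<dots> = card V - 1" using fin G(4) by (simp add: card_image)
    also have "card (s ` (Inl ` V)) = card V"
    proof -
      have "inj_on s (Inl ` V)" using inj by (rule inj_on_subset) (auto simp: fg_vertices_def)
      then show ?thesis by (simp add: card_image)
    qed
    finally show False using G(3) by simp
  qed
  show "\<forall>u\<in>V. \<exists>v\<in>V. s (Inl u) = Inl v" by (rule L)
  have im: "s ` (Inl ` V) = Inl ` V"
  proof -
    have "s ` (Inl ` V) \<subseteq> Inl ` V" using L by force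
    moreover have "inj_on s (Inl ` V)" using inj by (rule inj_on_subset) (auto simp: fg_vertices_def)
    ultimately show ?thesis using fin by (intro endo_inj_surj) auto
  qed
  show "\<forall>u\<in>V. \<exists>v\<in>V. s (Inr u) = Inr v"
  proof
    fix u assume u: "u \<in> V"
    have "s (Inr u) \<in> ?W" using sW u by simp
    moreover have "s (Inr u) \<notin> Inl ` V"
    proof
      assume "s (Inr u) \<in> Inl ` V"
      then obtain z where z: "z \<in> V" "s (Inr u) = s (Inl z)" using im by force
      then show False using inj u by (metis fgv_simps inj_onD sum.distinct(2))
    qed
    ultimately show "\<exists>v\<in>V. s (Inr u) = Inr v" by (auto elim: fgv_cases)
  qed
qed


lemma restrict_aut:
  assumes "automorphism (fg_vertices V) (fg_edges E g) s" "finite V"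
    and sides: "\<forall>u\<in>V. s (Inl u) = Inl (t u)"  "\<forall>u\<in>V. t u \<in> V"
  shows "automorphism V E t"
proof -
  let ?W = "fg_vertices V" and ?R = "fg_edges E g"
  have b: "bij_betw s ?W ?W" and r: "\<forall>u\<in>?W. \<forall>v\<in>?W. ?R (s u) (s v) \<longleftrightarrow> ?R u v"
    using assms(1) unfolding automorphism_def by auto
  have inj: "inj_on s ?W" using b by (auto simp: bij_betw_def)
  have it: "inj_on t V"
  proof (rule inj_onI)
    fix x y assume "x \<in> V" "y \<in> V" "t x = t y"
    then have "s (Inl x) = s (Inl y)" using sides by simp
    then show "x = y" using inj \<open>x \<in> V\<close> \<open>y \<in> V\<close> by (metis fgv_simps(1) inj_onD sum.inject(1))
  qed
  have "t ` V = V" using assms(2) sides(2) it by (intro endo_inj_surj) auto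
  then have "bij_betw t V V" using it by (simp add: bij_betw_def)
  moreover have "\<forall>u\<in>V. \<forall>v\<in>V. E (t u) (t v) \<longleftrightarrow> E u v"
  proof (intro ballI)
    fix u v assume "u \<in> V" "v \<in> V"
    then have "?R (s (Inl u)) (s (Inl v)) \<longleftrightarrow> ?R (Inl u) (Inl v)" using r by simp
    then show "E (t u) (t v) \<longleftrightarrow> E u v" using sides \<open>u \<in> V\<close> \<open>v \<in> V\<close> by simp
  qed
  ultimately show ?thesis by (simp add: automorphism_def)
qed

lemma restrict_aut2:
  assumes "automorphism (fg_vertices V) (fg_edges E g) s" "finite V"
    and sides: "\<forall>u\<in>V. s (Inr u) = Inr (t u)"  "\<forall>u\<in>V. t u \<in> V"
  shows "automorphism V E t"
proof -
  let ?W = "fg_vertices V" and ?R = "fg_edges E g"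
  have b: "bij_betw s ?W ?W" and r: "\<forall>u\<in>?W. \<forall>v\<in>?W. ?R (s u) (s v) \<longleftrightarrow> ?R u v"
    using assms(1) unfolding automorphism_def by auto
  have inj: "inj_on s ?W" using b by (auto simp: bij_betw_def)
  have it: "inj_on t V"
  proof (rule inj_onI)
    fix x y assume "x \<in> V" "y \<in> V" "t x = t y"
    then have "s (Inr x) = s (Inr y)" using sides by simp
    then show "x = y" using inj \<open>x \<in> V\<close> \<open>y \<in> V\<close> by (metis fgv_simps(2) inj_onD sum.inject(2))
  qed
  have "t ` V = V" using assms(2) sides(2) it by (intro endo_inj_surj) auto
  then have "bij_betw t V V" using it by (simp add: bij_betw_def)
  moreover have "\<forall>u\<in>V. \<forall>v\<in>V. E (t u) (t v) \<longleftrightarrow> E u v"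
  proof (intro ballI)
    fix u v assume "u \<in> V" "v \<in> V"
    then have "?R (s (Inr u)) (s (Inr v)) \<longleftrightarrow> ?R (Inr u) (Inr v)" using r by simp
    then show "E (t u) (t v) \<longleftrightarrow> E u v" using sides \<open>u \<in> V\<close> \<open>v \<in> V\<close> by simp
  qed
  ultimately show ?thesis by (simp add: automorphism_def)
qed

theorem lemma2p3:
  fixes V :: "'a set" and E :: "'a \<Rightarrow> 'a \<Rightarrow> bool" and g :: "'a \<Rightarrow> 'a"
  assumes "simple_graph V E"
    and "connected_graph V E"
    and "card V \<ge> 2"
    and "c \<in> V" and "\<forall>u\<in>V. g u = c"
  shows "Dist (fg_vertices V) (fg_edges E g) = Dist V E"
proof -
  let ?W = "fg_vertices V" and ?R = "fg_edges E g"
  have fin: "finite V" using assms(1) by (simp add: simple_graph_def)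
  have exG: "\<exists>t f. distinguishing V E t f" using dist_exists[OF fin] by blast
  have exF: "\<exists>t f. distinguishing ?W ?R t f" using dist_exists[OF finite_fgv[OF fin]] by blast
  have le1: "Dist V E \<le> Dist ?W ?R"
  proof -
    obtain h where h: "distinguishing ?W ?R (Dist ?W ?R) h"
      unfolding Dist_def using LeastI_ex[OF exF] by blast
    let ?f = "\<lambda>u. h (Inl u)"
    have "distinguishing V E (Dist ?W ?R) ?f"
      unfolding distinguishing_def
    proof (intro conjI allI impI ballI)
      fix v assume "v \<in> V" then show "?f v \<in> {1..Dist ?W ?R}" using h by (simp add: distinguishing_def)
    next
      fix t v assume a: "automorphism V E t \<and> (\<forall>v\<in>V. ?f (t v) = ?f v)" "v \<in> V"
      let ?s = "\<lambda>x. case x of Inl u \<Rightarrow> Inl (t u) | Inr u \<Rightarrow> Inr u"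
      have sa: "automorphism ?W ?R ?s" using ext_aut[OF assms(5)] a(1) by blast
      have "\<forall>x\<in>?W. h (?s x) = h x" using a(1) by (auto elim!: fgv_cases)
      then have "\<forall>x\<in>?W. ?s x = x" using h sa unfolding distinguishing_def by blast
      then have "?s (Inl v :: 'a + 'a) = Inl v" using a(2) fgv_simps(1)[of v V] by blast
      then show "t v = v" by simp
    qed
    then show ?thesis unfolding Dist_def[of V E] by (rule Least_le[where P="\<lambda>t. \<exists>f. distinguishing V E t f", OF exI])
  qed
  have le2: "Dist ?W ?R \<le> Dist V E"
  proof -
    obtain f where f: "distinguishing V E (Dist V E) f"
      unfolding Dist_def using LeastI_ex[OF exG] by blast
    let ?h = "\<lambda>x. case x of Inl u \<Rightarrow> f u | Inr u \<Rightarrow> f u"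
    have "distinguishing ?W ?R (Dist V E) ?h"
      unfolding distinguishing_def
    proof (intro conjI allI impI ballI)
      fix v assume "v \<in> ?W" then show "?h v \<in> {1..Dist V E}" using f
        by (auto simp: distinguishing_def elim!: fgv_cases)
    next
      fix s x assume a: "automorphism ?W ?R s \<and> (\<forall>v\<in>?W. ?h (s v) = ?h v)" "x \<in> ?W"
      have sa: "automorphism ?W ?R s" using a(1) by blast
      have sh: "\<forall>v\<in>?W. ?h (s v) = ?h v" using a(1) by blast
      note sides = aut_sides[OF assms sa]
      define t1 where "t1 u = (case s (Inl u) of Inl x \<Rightarrow> x | Inr x \<Rightarrow> x)" for u
      define t2 where "t2 u = (case s (Inr u) of Inl x \<Rightarrow> x | Inr x \<Rightarrow> x)" for u
      have s1: "\<forall>u\<in>V. s (Inl u) = Inl (t1 u) \<and> t1 u \<in> V" using sides(1) unfolding t1_def by force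
      have s2: "\<forall>u\<in>V. s (Inr u) = Inr (t2 u) \<and> t2 u \<in> V" using sides(2) unfolding t2_def by force
      have A1: "automorphism V E t1" using restrict_aut[OF sa fin] s1 by blast
      have A2: "automorphism V E t2" using restrict_aut2[OF sa fin] s2 by blast
      have "\<forall>v\<in>V. f (t1 v) = f v"
      proof
        fix v assume "v \<in> V" then show "f (t1 v) = f v" using sh[rule_format, of "Inl v"] s1 by simp
      qed
      then have i1: "\<forall>v\<in>V. t1 v = v" using f A1 unfolding distinguishing_def by blast
      have "\<forall>v\<in>V. f (t2 v) = f v"
      proof
        fix v assume "v \<in> V" then show "f (t2 v) = f v" using sh[rule_format, of "Inr v"] s2 by simp
      qed
      then have i2: "\<forall>v\<in>V. t2 v = v" using f A2 unfolding distinguishing_def by blast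
      show "s x = x" using a(2) s1 s2 i1 i2 by (auto elim!: fgv_cases)
    qed
    then show ?thesis unfolding Dist_def[of ?W ?R] by (rule Least_le[where P="\<lambda>t. \<exists>f. distinguishing ?W ?R t f", OF exI])
  qed
  show ?thesis using le1 le2 by simp
qed

end
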